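(* Let $G$ be a torsion-free group, $\mathbb{F}$ a field, $\alpha$ a zero divisor in $\mathbb{F}[G]$ with $supp(\alpha)=\{1,x,y,xy\}$ where $x,y$ are distinct non-trivial elements of $G$, and let $\beta$ be a mate of $\alpha$. Then $|supp(\alpha)supp(\beta)|\le 2|supp(\beta)|-2$.
   Context: $supp(\gamma)=\{x\in G:\gamma_x\ne0\}$; for subsets $B,C\subseteq G$, $BC=\{bc:b\in B,c\in C\}$. A mate of $\alpha$ is a non-zero $\beta$ with $\alpha\beta=0$ such that $|supp(\beta)|\le|supp(\beta')|$ for every non-zero $\beta'$ with $\alpha\beta'=0$. *)

theory Defs
  imports "HOL-Algebra.Coset"
begin

text \<open>Group ring F[G]: finitely supported functions from carrier G to a field 'f.\<close>

definition supp :: "('g \<Rightarrow> 'f::zero) \<Rightarrow> 'g set" where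
  "supp a = {x. a x \<noteq> 0}"

definition grp_ring_elem :: "('g, 'b) monoid_scheme \<Rightarrow> ('g \<Rightarrow> 'f::zero) \<Rightarrow> bool" where
  "grp_ring_elem G a \<longleftrightarrow> finite (supp a) \<and> supp a \<subseteq> carrier G"

definition grp_ring_mult :: "('g, 'b) monoid_scheme \<Rightarrow> ('g \<Rightarrow> 'f::field) \<Rightarrow> ('g \<Rightarrow> 'f) \<Rightarrow> ('g \<Rightarrow> 'f)" where
  "grp_ring_mult G a b = (\<lambda>z. if z \<in> carrier G
      then (\<Sum>x\<in>supp a. a x * b (inv\<^bsub>G\<^esub> x \<otimes>\<^bsub>G\<^esub> z)) else 0)"

definition torsion_free :: "('g, 'b) monoid_scheme \<Rightarrow> bool" where
  "torsion_free G \<longleftrightarrow> (\<forall>x\<in>carrier G. x \<noteq> \<one>\<^bsub>G\<^esub> \<longrightarrow> (\<forall>n::nat. n > 0 \<longrightarrow> x [^]\<^bsub>G\<^esub> n \<noteq> \<one>\<^bsub>G\<^esub>))"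

definition zero_divisor :: "('g, 'b) monoid_scheme \<Rightarrow> ('g \<Rightarrow> 'f::field) \<Rightarrow> bool" where
  "zero_divisor G a \<longleftrightarrow> grp_ring_elem G a \<and> a \<noteq> (\<lambda>_. 0) \<and>
     (\<exists>b. grp_ring_elem G b \<and> b \<noteq> (\<lambda>_. 0) \<and>
          (grp_ring_mult G a b = (\<lambda>_. 0) \<or> grp_ring_mult G b a = (\<lambda>_. 0)))"

definition mate :: "('g, 'b) monoid_scheme \<Rightarrow> ('g \<Rightarrow> 'f::field) \<Rightarrow> ('g \<Rightarrow> 'f) \<Rightarrow> bool" where
  "mate G a b \<longleftrightarrow> grp_ring_elem G b \<and> b \<noteq> (\<lambda>_. 0) \<and> grp_ring_mult G a b = (\<lambda>_. 0) \<and>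
     (\<forall>b'. grp_ring_elem G b' \<and> b' \<noteq> (\<lambda>_. 0) \<and> grp_ring_mult G a b' = (\<lambda>_. 0)
        \<longrightarrow> card (supp b) \<le> card (supp b'))"

end

theory Submission
  imports Defs
begin


context group begin

lemma pow_inj:
  assumes tf: "torsion_free G" and t: "t \<in> carrier G" "t \<noteq> \<one>" and h: "h \<in> carrier G"
  shows "inj (\<lambda>m::nat. t [^] m \<otimes> h)"
proof (rule injI)
  have key: "t [^] m \<noteq> t [^] m'" if "m < m'" for m m' :: nat
  proof
    assume eq: "t [^] m = t [^] m'"
    have "t [^] m' = t [^] m \<otimes> t [^] (m' - m)" using that t by (simp add: nat_pow_mult)
    hence "t [^] m \<otimes> \<one> = t [^] m \<otimes> t [^] (m' - m)" using eq t by simp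
    hence "t [^] (m' - m) = \<one>" using t by simp
    moreover have "m' - m > 0" using that by simp
    ultimately show False using tf t unfolding torsion_free_def by blast
  qed
  fix m m' :: nat assume "t [^] m \<otimes> h = t [^] m' \<otimes> h"
  hence "t [^] m = t [^] m'" using t h by simp
  thus "m = m'" using key[of m m'] key[of m' m] by (metis linorder_neqE_nat)
qed

lemma no_forward:
  assumes tf: "torsion_free G" and t: "t \<in> carrier G" "t \<noteq> \<one>"
    and A: "finite A" "A \<subseteq> carrier G" "h0 \<in> A"
    and fw: "\<And>h. h \<in> A \<Longrightarrow> \<exists>k::nat. k > 0 \<and> t [^] k \<otimes> h \<in> A"
  shows False
proof -
  have h0: "h0 \<in> carrier G" using A by auto
  let ?f = "\<lambda>m::nat. t [^] m \<otimes> h0"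
  define M where "M = ?f -` A"
  have fin: "finite M" unfolding M_def by (rule finite_vimageI[OF A(1) pow_inj[OF tf t h0]])
  have "0 \<in> M" unfolding M_def using A h0 by simp
  define m0 where "m0 = Max M"
  have m0M: "m0 \<in> M" unfolding m0_def using fin \<open>0 \<in> M\<close> by (intro Max_in) auto
  then have "?f m0 \<in> A" unfolding M_def by simp
  then obtain k :: nat where k: "k > 0" "t [^] k \<otimes> ?f m0 \<in> A" using fw by blast
  have "t [^] k \<otimes> ?f m0 = ?f (k + m0)" using t h0 by (metis m_assoc nat_pow_closed nat_pow_mult)
  hence "k + m0 \<in> M" using k unfolding M_def by simp
  hence "k + m0 \<le> m0" unfolding m0_def using fin by (rule Max_ge[rotated])
  thus False using k by simp
qed

end


lemma supp_iff: "z \<in> supp f \<longleftrightarrow> f z \<noteq> 0" by (simp add: supp_def)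

lemma mult_eq: "g \<in> carrier G \<Longrightarrow> grp_ring_mult G a b g = (\<Sum>s\<in>supp a. a s * b (inv\<^bsub>G\<^esub> s \<otimes>\<^bsub>G\<^esub> g))"
  by (simp add: grp_ring_mult_def)

lemma single_term:
  fixes a b :: "'g \<Rightarrow> 'f::field"
  assumes fin: "finite (supp a)" and s0: "s0 \<in> supp a" and g: "g \<in> carrier G"
    and bh: "b (inv\<^bsub>G\<^esub> s0 \<otimes>\<^bsub>G\<^esub> g) \<noteq> 0"
    and rest: "\<And>s. s \<in> supp a \<Longrightarrow> s \<noteq> s0 \<Longrightarrow> b (inv\<^bsub>G\<^esub> s \<otimes>\<^bsub>G\<^esub> g) = 0"
  shows "grp_ring_mult G a b g \<noteq> 0"
proof -
  have "grp_ring_mult G a b g = a s0 * b (inv\<^bsub>G\<^esub> s0 \<otimes>\<^bsub>G\<^esub> g) + (\<Sum>s\<in>supp a - {s0}. a s * b (inv\<^bsub>G\<^esub> s \<otimes>\<^bsub>G\<^esub> g))"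
    unfolding mult_eq[OF g] by (rule sum.remove[OF fin s0])
  also have "(\<Sum>s\<in>supp a - {s0}. a s * b (inv\<^bsub>G\<^esub> s \<otimes>\<^bsub>G\<^esub> g)) = 0"
    by (rule sum.neutral) (use rest in auto)
  finally show ?thesis using s0 bh by (simp add: supp_iff)
qed

context group begin

lemma inv_cancel_left: "a \<in> carrier G \<Longrightarrow> h \<in> carrier G \<Longrightarrow> inv a \<otimes> (a \<otimes> h) = h"
  by (simp add: m_assoc[symmetric])

lemma pow_shift1: "x \<in> carrier G \<Longrightarrow> h \<in> carrier G \<Longrightarrow> x [^] (Suc m) \<otimes> h = x \<otimes> (x [^] m \<otimes> h)"
  by (metis nat_pow_Suc2 m_assoc nat_pow_closed)

lemma pow_shift2: "x \<in> carrier G \<Longrightarrow> h \<in> carrier G \<Longrightarrow> x [^] (Suc m) \<otimes> h = x [^] m \<otimes> (x \<otimes> h)"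
  by (simp add: m_assoc)

lemma cyclic_case:
  fixes \<alpha> \<beta> :: "'a \<Rightarrow> 'f::field"
  assumes tf: "torsion_free G" and x: "x \<in> carrier G" and y: "y \<in> carrier G"
    and x1: "x \<noteq> \<one>" and y1: "y \<noteq> \<one>" and xy: "x \<noteq> y"
    and S: "supp \<alpha> = {\<one>, x, y, x \<otimes> y}"
    and zero: "\<And>g. g \<in> carrier G \<Longrightarrow> grp_ring_mult G \<alpha> \<beta> g = 0"
    and finB: "finite (supp \<beta>)" and BG: "supp \<beta> \<subseteq> carrier G" and h0: "h0 \<in> supp \<beta>"
    and rel: "y \<otimes> x [^] (i::nat) = x [^] (j::nat)"
  shows False
proof (rule no_forward[OF tf x x1 finB BG h0])
  fix h assume hB: "h \<in> supp \<beta>"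
  hence h: "h \<in> carrier G" and bh: "\<beta> h \<noteq> 0" using BG by (auto simp: supp_iff)
  have finS: "finite (supp \<alpha>)" using S by simp
  show "\<exists>k::nat. k > 0 \<and> x [^] k \<otimes> h \<in> supp \<beta>"
  proof (rule ccontr)
    assume "\<not> ?thesis"
    hence nk: "\<And>k::nat. k > 0 \<Longrightarrow> \<beta> (x [^] k \<otimes> h) = 0" unfolding supp_iff by blast
    show False
    proof (cases "i \<le> j")
      case True
      define m where "m = j - i"
      have "x [^] m \<otimes> x [^] i = x [^] j" using x True by (simp add: nat_pow_mult m_def)
      hence "y \<otimes> x [^] i = x [^] m \<otimes> x [^] i" using rel by simp
      hence ym: "y = x [^] m" using x y by simp
      have m0: "m \<noteq> 0"
      proof
        assume "m = 0" thus False using ym y1 by simp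
      qed
      have m1: "m \<noteq> 1" using ym xy x by auto
      define g where "g = x [^] (Suc m) \<otimes> h"
      have g: "g \<in> carrier G" using x h by (simp add: g_def)
      have xym: "x \<otimes> y = x [^] Suc m" using x ym by (simp only: nat_pow_Suc2)
      have "grp_ring_mult G \<alpha> \<beta> g \<noteq> 0"
      proof (rule single_term[OF finS, of "x \<otimes> y"])
        show "x \<otimes> y \<in> supp \<alpha>" using S by simp
        show "g \<in> carrier G" by (rule g)
        have "inv (x \<otimes> y) \<otimes> g = h" unfolding g_def xym using x h by (intro inv_cancel_left) auto
        thus "\<beta> (inv (x \<otimes> y) \<otimes> g) \<noteq> 0" using bh by simp
        fix s assume "s \<in> supp \<alpha>" "s \<noteq> x \<otimes> y"
        hence "s = \<one> \<or> s = x \<or> s = y" using S by auto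
        thus "\<beta> (inv s \<otimes> g) = 0"
        proof (elim disjE)
          assume "s = \<one>" thus ?thesis using nk[of "Suc m"] g by (simp add: g_def)
        next
          assume "s = x"
          have "inv x \<otimes> g = x [^] m \<otimes> h" unfolding g_def using x h
            by (simp only: pow_shift1 inv_cancel_left nat_pow_closed m_closed)
          thus ?thesis using nk[of m] m0 \<open>s = x\<close> by simp
        next
          assume "s = y"
          have "inv y \<otimes> g = x \<otimes> h" unfolding g_def ym using x h
            by (simp only: pow_shift2 inv_cancel_left nat_pow_closed m_closed)
          thus ?thesis using nk[of 1] x \<open>s = y\<close> by simp
        qed
      qed
      thus False using zero[OF g] by simp
    next
      case False
      define m where "m = i - j"
      have "x [^] i = x [^] m \<otimes> x [^] j" using x False by (simp add: nat_pow_mult m_def)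
      hence "(y \<otimes> x [^] m) \<otimes> x [^] j = \<one> \<otimes> x [^] j" using rel x y by (simp add: m_assoc)
      hence "y \<otimes> x [^] m = \<one>" using x y by (metis l_one m_closed nat_pow_closed r_cancel_one')
      hence iy: "inv y = x [^] m" using x y by (metis inv_equality inv_inv nat_pow_closed)
      have m0: "m > 0" using False m_def by simp
      define g where "g = x \<otimes> h"
      have g: "g \<in> carrier G" using x h by (simp add: g_def)
      have "grp_ring_mult G \<alpha> \<beta> g \<noteq> 0"
      proof (rule single_term[OF finS, of x])
        show "x \<in> supp \<alpha>" using S by simp
        show "g \<in> carrier G" by (rule g)
        show "\<beta> (inv x \<otimes> g) \<noteq> 0" using x h bh by (simp add: g_def m_assoc[symmetric])
        fix s assume "s \<in> supp \<alpha>" "s \<noteq> x"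
        hence "s = \<one> \<or> s = y \<or> s = x \<otimes> y" using S by auto
        thus "\<beta> (inv s \<otimes> g) = 0"
        proof (elim disjE)
          assume "s = \<one>" thus ?thesis using nk[of 1] g x by (simp add: g_def)
        next
          assume "s = y" thus ?thesis using nk[of "Suc m"] iy x h
            by (simp add: g_def m_assoc)
        next
          assume "s = x \<otimes> y" thus ?thesis using nk[of m] m0 iy x y h
            by (simp add: g_def inv_mult_group m_assoc inv_cancel_left)
        qed
      qed
      thus False using zero[OF g] by simp
    qed
  qed
qed

end


context group begin

lemma inv_cancel_right: "a \<in> carrier G \<Longrightarrow> h \<in> carrier G \<Longrightarrow> a \<otimes> (inv a \<otimes> h) = h"
  by (simp add: m_assoc[symmetric])

lemma main_case:
  fixes \<alpha> \<beta> :: "'a \<Rightarrow> 'f::field"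
  assumes tf: "torsion_free G" and x: "x \<in> carrier G" and y: "y \<in> carrier G"
    and x1: "x \<noteq> \<one>" and y1: "y \<noteq> \<one>" and xy: "x \<noteq> y" and xy1: "x \<otimes> y \<noteq> \<one>"
    and S: "supp \<alpha> = {\<one>, x, y, x \<otimes> y}"
    and zero: "\<And>g. g \<in> carrier G \<Longrightarrow> grp_ring_mult G \<alpha> \<beta> g = 0"
    and finB: "finite (supp \<beta>)" and BG: "supp \<beta> \<subseteq> carrier G" and h0: "h0 \<in> supp \<beta>"
  shows "int (card (supp \<alpha> <#> supp \<beta>)) \<le> 2 * int (card (supp \<beta>)) - 2"
proof -
  define a where "a = \<alpha> \<one>"
  define b where "b = \<alpha> x"
  define c where "c = \<alpha> y"
  define d where "d = \<alpha> (x \<otimes> y)"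
  have a0: "a \<noteq> 0" and b0: "b \<noteq> 0" and c0: "c \<noteq> 0" and d0: "d \<noteq> 0"
    using S unfolding a_def b_def c_def d_def by (auto simp: supp_iff[symmetric])
  have d1: "\<one> \<noteq> x" "\<one> \<noteq> y" "\<one> \<noteq> x \<otimes> y" "x \<noteq> y" "x \<noteq> x \<otimes> y" "y \<noteq> x \<otimes> y"
    using x1 y1 xy xy1 x y by (auto simp: r_cancel_one' l_cancel_one')
  have P: "a * \<beta> g + b * \<beta> (inv x \<otimes> g) + c * \<beta> (inv y \<otimes> g) + d * \<beta> (inv y \<otimes> (inv x \<otimes> g)) = 0"
    if g: "g \<in> carrier G" for g
  proof -
    have "grp_ring_mult G \<alpha> \<beta> g = a * \<beta> g + (b * \<beta> (inv x \<otimes> g) + (c * \<beta> (inv y \<otimes> g) + d * \<beta> (inv y \<otimes> (inv x \<otimes> g))))"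
      unfolding mult_eq[OF g] S using d1 x y g
      by (simp add: a_def b_def c_def d_def inv_mult_group m_assoc)
    thus ?thesis using zero[OF g] by (simp add: add.assoc)
  qed
  define B where "B = supp \<beta>"
  define yB where "yB = (\<lambda>z. y \<otimes> z) ` B"
  define D where "D = B \<union> yB"
  define xD where "xD = (\<lambda>z. x \<otimes> z) ` D"
  define Bot where "Bot = D - xD"
  define K where "K = {t \<in> D. x \<otimes> t \<in> D}"
  define Top where "Top = D - K"
  have BG': "B \<subseteq> carrier G" using BG B_def by simp
  have finB': "finite B" using finB B_def by simp
  have yBG: "yB \<subseteq> carrier G" using BG' y unfolding yB_def by auto
  have DG: "D \<subseteq> carrier G" using BG' yBG D_def by auto
  have finyB: "finite yB" using finB' yB_def by simp
  have finD: "finite D" using finB' finyB D_def by simp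
  have finxD: "finite xD" using finD xD_def by simp
  have inB: "w \<in> B \<longleftrightarrow> \<beta> w \<noteq> 0" for w unfolding B_def supp_iff by simp
  have yB_iff: "w \<in> yB \<longleftrightarrow> inv y \<otimes> w \<in> B" if w: "w \<in> carrier G" for w
  proof
    assume "w \<in> yB" then obtain z where "z \<in> B" "w = y \<otimes> z" unfolding yB_def by auto
    thus "inv y \<otimes> w \<in> B" using BG' y by (auto simp: inv_cancel_left)
  next
    assume "inv y \<otimes> w \<in> B"
    moreover have "w = y \<otimes> (inv y \<otimes> w)" using w y by (simp add: inv_cancel_right)
    ultimately show "w \<in> yB" unfolding yB_def by blast
  qed
  have D_iff: "w \<in> D \<longleftrightarrow> \<beta> w \<noteq> 0 \<or> \<beta> (inv y \<otimes> w) \<noteq> 0" if w: "w \<in> carrier G" for w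
    using yB_iff[OF w] inB unfolding D_def by blast
  have xD_iff: "w \<in> xD \<longleftrightarrow> inv x \<otimes> w \<in> D" if w: "w \<in> carrier G" for w
  proof
    assume "w \<in> xD" then obtain z where "z \<in> D" "w = x \<otimes> z" unfolding xD_def by auto
    thus "inv x \<otimes> w \<in> D" using DG x by (auto simp: inv_cancel_left)
  next
    assume "inv x \<otimes> w \<in> D"
    moreover have "w = x \<otimes> (inv x \<otimes> w)" using w x by (simp add: inv_cancel_right)
    ultimately show "w \<in> xD" unfolding xD_def by blast
  qed
  have SB: "supp \<alpha> <#> supp \<beta> = D \<union> xD"
  proof
    show "supp \<alpha> <#> supp \<beta> \<subseteq> D \<union> xD"
    proof
      fix w assume "w \<in> supp \<alpha> <#> supp \<beta>"
      then obtain s z where sz: "s \<in> supp \<alpha>" "z \<in> B" "w = s \<otimes> z" unfolding set_mult_def B_def by auto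
      have z: "z \<in> carrier G" using sz BG' by auto
      have "s = \<one> \<or> s = x \<or> s = y \<or> s = x \<otimes> y" using sz S by auto
      thus "w \<in> D \<union> xD"
      proof (elim disjE)
        assume "s = \<one>" thus ?thesis using sz z D_def by auto
      next
        assume "s = x" thus ?thesis using sz z D_def xD_def by auto
      next
        assume "s = y" thus ?thesis using sz z D_def yB_def by auto
      next
        assume "s = x \<otimes> y"
        hence "w = x \<otimes> (y \<otimes> z)" using sz x y z by (simp add: m_assoc)
        moreover have "y \<otimes> z \<in> D" using sz D_def yB_def by auto
        ultimately show ?thesis using xD_def by auto
      qed
    qed
  next
    show "D \<union> xD \<subseteq> supp \<alpha> <#> supp \<beta>"
    proof
      fix w assume "w \<in> D \<union> xD"
      hence "(\<exists>z\<in>B. w = \<one> \<otimes> z) \<or> (\<exists>z\<in>B. w = y \<otimes> z) \<or> (\<exists>z\<in>B. w = x \<otimes> z) \<or> (\<exists>z\<in>B. w = (x \<otimes> y) \<otimes> z)"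
        unfolding D_def xD_def yB_def using BG' x y by (auto simp: m_assoc subsetD)
      thus "w \<in> supp \<alpha> <#> supp \<beta>" unfolding set_mult_def S B_def by blast
    qed
  qed
  have inj_y: "inj_on (\<lambda>z. y \<otimes> z) B" using BG' y by (auto simp: inj_on_def subsetD)
  have inj_x: "inj_on (\<lambda>z. x \<otimes> z) D" using DG x by (auto simp: inj_on_def subsetD)
  have c_yB: "card yB = card B" using inj_y yB_def by (simp add: card_image)
  have c_xD: "card xD = card D" using inj_x xD_def by (simp add: card_image)
  have c_D: "card D + card (B \<inter> yB) = 2 * card B"
    using card_Un_Int[OF finB' finyB] c_yB D_def by simp
  have c_SB: "card (D \<union> xD) + card (D \<inter> xD) = 2 * card D"
    using card_Un_Int[OF finD finxD] c_xD by simp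
  have c_Bot: "card Bot = card D - card (D \<inter> xD)"
    unfolding Bot_def using finD by (simp add: card_Diff_subset_Int)
  have K_img: "(\<lambda>z. x \<otimes> z) ` K = D \<inter> xD"
  proof
    show "(\<lambda>z. x \<otimes> z) ` K \<subseteq> D \<inter> xD" unfolding K_def xD_def by auto
    show "D \<inter> xD \<subseteq> (\<lambda>z. x \<otimes> z) ` K" unfolding K_def xD_def by auto
  qed
  have c_K: "card K = card (D \<inter> xD)"
  proof -
    have "inj_on (\<lambda>z. x \<otimes> z) K" using inj_x K_def by (auto simp: inj_on_def)
    thus ?thesis using K_img card_image by metis
  qed
  have c_Top: "card Top = card Bot"
    unfolding Top_def using finD c_K c_Bot by (simp add: card_Diff_subset K_def)
  have Bot_prop: "a * \<beta> u + c * \<beta> (inv y \<otimes> u) = 0 \<and> \<beta> u \<noteq> 0 \<and> \<beta> (inv y \<otimes> u) \<noteq> 0" if u: "u \<in> Bot" for u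
  proof -
    have uG: "u \<in> carrier G" using u DG Bot_def by auto
    have "inv x \<otimes> u \<notin> D" using u xD_iff[OF uG] Bot_def by auto
    hence z: "\<beta> (inv x \<otimes> u) = 0" "\<beta> (inv y \<otimes> (inv x \<otimes> u)) = 0" using D_iff x uG by auto
    have e: "a * \<beta> u + c * \<beta> (inv y \<otimes> u) = 0" using P[OF uG] z by simp
    have "\<beta> u \<noteq> 0 \<or> \<beta> (inv y \<otimes> u) \<noteq> 0" using u D_iff[OF uG] Bot_def by auto
    thus ?thesis using e a0 c0 by auto
  qed
  have Top_prop: "b * \<beta> t + d * \<beta> (inv y \<otimes> t) = 0 \<and> \<beta> t \<noteq> 0 \<and> \<beta> (inv y \<otimes> t) \<noteq> 0" if t: "t \<in> Top" for t
  proof -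
    have tG: "t \<in> carrier G" using t DG Top_def by auto
    have xtG: "x \<otimes> t \<in> carrier G" using x tG by simp
    have "x \<otimes> t \<notin> D" using t Top_def K_def by auto
    hence z: "\<beta> (x \<otimes> t) = 0" "\<beta> (inv y \<otimes> (x \<otimes> t)) = 0" using D_iff[OF xtG] by auto
    have e: "b * \<beta> t + d * \<beta> (inv y \<otimes> t) = 0" using P[OF xtG] z x tG by (simp add: inv_cancel_left)
    have "\<beta> t \<noteq> 0 \<or> \<beta> (inv y \<otimes> t) \<noteq> 0" using t D_iff[OF tG] Top_def by auto
    thus ?thesis using e b0 d0 by auto
  qed
  have in_BIyB: "w \<in> B \<inter> yB" if "\<beta> w \<noteq> 0" "\<beta> (inv y \<otimes> w) \<noteq> 0" "w \<in> carrier G" for w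
    using that inB yB_iff by auto
  have Bot_sub: "Bot \<subseteq> B \<inter> yB" using Bot_prop in_BIyB DG Bot_def by blast
  have Top_sub: "Top \<subseteq> B \<inter> yB" using Top_prop in_BIyB DG Top_def by blast
  have disj: "Bot \<inter> Top = {}"
  proof (rule ccontr)
    assume "Bot \<inter> Top \<noteq> {}"
    then obtain u where u: "u \<in> Bot" "u \<in> Top" by auto
    let ?p = "\<beta> u" and ?q = "\<beta> (inv y \<otimes> u)"
    have e1: "a * ?p + c * ?q = 0" and e2: "b * ?p + d * ?q = 0" and q0: "?q \<noteq> 0"
      using Bot_prop[OF u(1)] Top_prop[OF u(2)] by auto
    have "(a * d - b * c) * ?q = a * (b * ?p + d * ?q) - b * (a * ?p + c * ?q)" by (simp add: algebra_simps)
    also have "\<dots> = 0" using e1 e2 by simp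
    finally have ad: "a * d = b * c" using q0 by simp
    define \<gamma> where "\<gamma> g = a * \<beta> g + c * \<beta> (inv y \<otimes> g)" for g
    define A where "A = {g \<in> carrier G. \<gamma> g \<noteq> 0}"
    have AD: "A \<subseteq> D" unfolding A_def \<gamma>_def using D_iff by fastforce
    have finA: "finite A" using AD finD finite_subset by auto
    have AG: "A \<subseteq> carrier G" unfolding A_def by auto
    have Ane: "A \<noteq> {}"
    proof
      assume Ae: "A = {}"
      show False
      proof (rule no_forward[OF tf y y1 finB' BG'])
        show "h0 \<in> B" using h0 B_def by simp
        fix h assume hB: "h \<in> B"
        hence hG: "h \<in> carrier G" using BG' by auto
        have "\<gamma> (y \<otimes> h) = 0" using Ae A_def y hG by auto
        hence "a * \<beta> (y \<otimes> h) + c * \<beta> h = 0" unfolding \<gamma>_def using y hG by (simp add: inv_cancel_left)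
        moreover have "\<beta> h \<noteq> 0" using hB inB by blast
        ultimately have "\<beta> (y \<otimes> h) \<noteq> 0" using c0 by (metis add.left_neutral mult_eq_0_iff mult_zero_right)
        hence "y [^] (1::nat) \<otimes> h \<in> B" using inB y by simp
        thus "\<exists>k::nat. k > 0 \<and> y [^] k \<otimes> h \<in> B" by blast
      qed
    qed
    then obtain g0 where g0: "g0 \<in> A" by auto
    show False
    proof (rule no_forward[OF tf x x1 finA AG g0])
      fix h assume hA: "h \<in> A"
      hence hG: "h \<in> carrier G" and gh: "\<gamma> h \<noteq> 0" unfolding A_def by auto
      have xhG: "x \<otimes> h \<in> carrier G" using x hG by simp
      have e: "\<gamma> (x \<otimes> h) + (b * \<beta> h + d * \<beta> (inv y \<otimes> h)) = 0"
        using P[OF xhG] x hG unfolding \<gamma>_def by (simp add: inv_cancel_left algebra_simps)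
      have "a * (b * \<beta> h + d * \<beta> (inv y \<otimes> h)) = b * \<gamma> h"
        unfolding \<gamma>_def using ad by (simp add: algebra_simps)
      hence "b * \<beta> h + d * \<beta> (inv y \<otimes> h) \<noteq> 0" using gh b0 by auto
      hence "\<gamma> (x \<otimes> h) \<noteq> 0" using e by (metis add.left_neutral)
      hence "x [^] (1::nat) \<otimes> h \<in> A" using xhG x unfolding A_def by simp
      thus "\<exists>k::nat. k > 0 \<and> x [^] k \<otimes> h \<in> A" by blast
    qed
  qed
  have twoq: "card Bot + card Top \<le> card (B \<inter> yB)"
  proof -
    have "card (Bot \<union> Top) = card Bot + card Top"
      using disj finD Bot_def Top_def by (intro card_Un_disjoint) auto
    moreover have "card (Bot \<union> Top) \<le> card (B \<inter> yB)"
      using Bot_sub Top_sub finB' by (intro card_mono) auto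
    ultimately show ?thesis by simp
  qed
  have h0D: "h0 \<in> D" using h0 B_def D_def by simp
  have q0: "card Bot \<noteq> 0"
  proof
    assume "card Bot = 0"
    hence "Bot = {}" using finD Bot_def by simp
    hence DxD: "D \<subseteq> xD" using Bot_def by auto
    have ix: "inv x \<in> carrier G" "inv x \<noteq> \<one>" using x x1 by auto
    show False
    proof (rule no_forward[OF tf ix finD DG h0D])
      fix h assume hD: "h \<in> D"
      hence hG: "h \<in> carrier G" using DG by auto
      have "inv x \<otimes> h \<in> D" using DxD hD xD_iff[OF hG] by auto
      hence "inv x [^] (1::nat) \<otimes> h \<in> D" using x by simp
      thus "\<exists>k::nat. k > 0 \<and> inv x [^] k \<otimes> h \<in> D" by blast
    qed
  qed
  have q1: "card Bot \<noteq> 1"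
  proof
    assume "card Bot = 1"
    then obtain u where Bu: "Bot = {u}" using card_1_singletonE by blast
    have ix: "inv x \<in> carrier G" "inv x \<noteq> \<one>" using x x1 by auto
    have chain: "\<exists>m::nat. dd = x [^] m \<otimes> u" if dd: "dd \<in> D" for dd
    proof -
      have ddG: "dd \<in> carrier G" using dd DG by auto
      define M where "M = (\<lambda>m::nat. inv x [^] m \<otimes> dd) -` D"
      have finM: "finite M" unfolding M_def by (rule finite_vimageI[OF finD pow_inj[OF tf ix ddG]])
      have "0 \<in> M" unfolding M_def using dd ddG by simp
      define m0 where "m0 = Max M"
      have m0M: "m0 \<in> M" unfolding m0_def using finM \<open>0 \<in> M\<close> by (intro Max_in) auto
      have "Suc m0 \<notin> M" using finM m0_def by (metis Max_ge Suc_n_not_le_n)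
      define e where "e = inv x [^] m0 \<otimes> dd"
      have eD: "e \<in> D" using m0M unfolding M_def e_def by simp
      have eG: "e \<in> carrier G" using eD DG by auto
      have "inv x \<otimes> e = inv x [^] Suc m0 \<otimes> dd" unfolding e_def by (rule pow_shift1[OF ix(1) ddG, symmetric])
      hence "inv x \<otimes> e \<notin> D" using \<open>Suc m0 \<notin> M\<close> unfolding M_def by simp
      hence "e \<in> Bot" using eD xD_iff[OF eG] Bot_def by simp
      hence "e = u" using Bu by simp
      moreover have "x [^] m0 \<otimes> e = dd" unfolding e_def using x ddG
        by (simp add: nat_pow_inv inv_cancel_right)
      ultimately show ?thesis by blast
    qed
    obtain i :: nat where i: "h0 = x [^] i \<otimes> u" using chain h0D by blast
    have "y \<otimes> h0 \<in> D" using h0 B_def D_def yB_def by auto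
    then obtain j :: nat where j: "y \<otimes> h0 = x [^] j \<otimes> u" using chain by blast
    have uG: "u \<in> carrier G" using Bu DG Bot_def by auto
    have "(y \<otimes> x [^] i) \<otimes> u = x [^] j \<otimes> u" using i j x y uG by (simp add: m_assoc)
    hence rel: "y \<otimes> x [^] i = x [^] j" using x y uG by simp
    show False
      by (rule cyclic_case[OF tf x y x1 y1 xy S zero finB BG h0 rel])
  qed
  have "card (D \<union> xD) + 2 \<le> 2 * card B"
  proof -
    have "card (D \<inter> xD) \<le> card D" using finD by (simp add: card_mono)
    thus ?thesis using c_D c_SB c_Bot c_Top twoq q0 q1 by linarith
  qed
  thus ?thesis using SB B_def by simp
qed

end

theorem mainTheorem15:
  fixes G :: "('g, 'b) monoid_scheme" and \<alpha> \<beta> :: "'g \<Rightarrow> 'f::field" and x y :: 'g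
  assumes "group G" and "torsion_free G"
    and "x \<in> carrier G" and "y \<in> carrier G"
    and "x \<noteq> \<one>\<^bsub>G\<^esub>" and "y \<noteq> \<one>\<^bsub>G\<^esub>" and "x \<noteq> y"
    and "zero_divisor G \<alpha>"
    and "supp \<alpha> = {\<one>\<^bsub>G\<^esub>, x, y, x \<otimes>\<^bsub>G\<^esub> y}"
    and "mate G \<alpha> \<beta>"
  shows "int (card (supp \<alpha> <#>\<^bsub>G\<^esub> supp \<beta>)) \<le> 2 * int (card (supp \<beta>)) - 2"
proof -
  interpret group G by (rule assms(1))
  have el: "grp_ring_elem G \<beta>" and nz: "\<beta> \<noteq> (\<lambda>_. 0)" and pr: "grp_ring_mult G \<alpha> \<beta> = (\<lambda>_. 0)"
    using assms(10) unfolding mate_def by auto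
  have finB: "finite (supp \<beta>)" and BG: "supp \<beta> \<subseteq> carrier G" using el unfolding grp_ring_elem_def by auto
  obtain h0 where "\<beta> h0 \<noteq> 0" using nz by auto
  hence h0: "h0 \<in> supp \<beta>" by (simp add: supp_iff)
  have zero: "\<And>g. g \<in> carrier G \<Longrightarrow> grp_ring_mult G \<alpha> \<beta> g = 0" using pr by simp
  show ?thesis
  proof (cases "x \<otimes>\<^bsub>G\<^esub> y = \<one>\<^bsub>G\<^esub>")
    case True
    have "inv\<^bsub>G\<^esub> y = x" using True assms(4,3) by (rule inv_equality)
    hence "y \<otimes>\<^bsub>G\<^esub> x = \<one>\<^bsub>G\<^esub>" using assms(4) by auto
    hence rel: "y \<otimes>\<^bsub>G\<^esub> x [^]\<^bsub>G\<^esub> (1::nat) = x [^]\<^bsub>G\<^esub> (0::nat)" using assms(3) by simp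
    show ?thesis
      using cyclic_case[OF assms(2,3,4,5,6,7,9) zero finB BG h0 rel] by simp
  next
    case False
    show ?thesis by (rule main_case[OF assms(2,3,4,5,6,7) False assms(9) zero finB BG h0])
  qed
qed

end
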